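(* For every integer $r\ge1$ and every $x\in D$ (for $r=1$, every $x\in\mathbb C$ with $\mathcal S_1(x)\neq0$), $$\mathcal C_r(x)^{2^{r-1}}=\frac{\mathcal S_r(2x)}{\mathcal S_r(x)^{2^{r-1}}}.$$
   Context: For an integer $r\ge2$ let $P_r(y)=(1-y)\exp\left(y+\frac{y^2}{2}+\cdots+\frac{y^r}{r}\right)$. The multiple cosine function of Kurokawa–Koyama of order $r\ge2$ is $\mathcal C_r(x)=\prod_{n\ge1,\ n\text{ odd}}\left\{P_r\left(\frac{x}{n/2}\right)P_r\left(-\frac{x}{n/2}\right)^{(-1)^{r-1}}\right\}^{(n/2)^{r-1}}$, interpreted as $\mathcal C_r(x)=\exp\Big(\sum_{n\ge1,\,n\text{ odd}}(n/2)^{r-1}\big[\operatorname{Log}P_r(2x/n)+(-1)^{r-1}\operatorname{Log}P_r(-2x/n)\big]\Big)$, where $\operatorname{Log}P_r(y):=\operatorname{Log}(1-y)+y+\frac{y^2}{2}+\cdots+\frac{y^r}{r}$ with $\operatorname{Log}$ the principal branch, for $x\in D=\mathbb C\setminus\big((-\infty,-\tfrac12]\cup[\tfrac12,\infty)\big)$; $\mathcal C_1(x)=2\cos(\pi x)$. Kurokawa's multiple sine function is $\mathcal S_1(x)=2\sin(\pi x)$ and, for $r\ge2$, the meromorphic function $\mathcal S_r(x)=\exp\left(\frac{x^{r-1}}{r-1}\right)\prod_{n=1}^\infty\left\{P_r\left(\frac xn\right)P_r\left(-\frac xn\right)^{(-1)^{r-1}}\right\}^{n^{r-1}}$. *)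

theory Defs
  imports "HOL-Analysis.Analysis"
begin

definition Pr :: "nat \<Rightarrow> complex \<Rightarrow> complex" where
  "Pr r y = (1 - y) * exp (\<Sum>k=1..r. y ^ k / of_nat k)"

definition LogPr :: "nat \<Rightarrow> complex \<Rightarrow> complex" where
  "LogPr r y = Ln (1 - y) + (\<Sum>k=1..r. y ^ k / of_nat k)"

definition Dom :: "complex set" where
  "Dom = - (complex_of_real ` ({..-1/2} \<union> {1/2..}))"

definition mcos :: "nat \<Rightarrow> complex \<Rightarrow> complex" where
  "mcos r x = (if r = 1 then 2 * cos (of_real pi * x)
     else exp (\<Sum>k. (of_nat (2*k+1) / 2) ^ (r - 1) *
        (LogPr r (2 * x / of_nat (2*k+1)) + (-1) ^ (r - 1) * LogPr r (- 2 * x / of_nat (2*k+1)))))"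

definition msin :: "nat \<Rightarrow> complex \<Rightarrow> complex" where
  "msin r x = (if r = 1 then 2 * sin (of_real pi * x)
     else exp (x ^ (r - 1) / of_nat (r - 1)) *
       (\<Prod>m. (Pr r (x / of_nat (Suc m)) * (Pr r (- x / of_nat (Suc m))) powi ((-1) ^ (r - 1)))
               ^ (Suc m ^ (r - 1))))"

end

theory Submission
  imports Defs
begin

lemma LogPr_bound:
  assumes z: "norm z \<le> 1/2"
  shows "norm (LogPr r z) \<le> 2 * norm z ^ (r+1)"
proof -
  define f where "f = (\<lambda>n. - (z ^ n) / of_nat n)"
  have "cmod (-z) < 1" using z by simp
  from Ln_series'[OF this] have fs: "f sums Ln (1 - z)" by (simp add: f_def)
  have s0: "(\<Sum>i<Suc r. f i) = - (\<Sum>k=1..r. z ^ k / of_nat k)"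
  proof -
    have "(\<Sum>i<Suc r. f i) = (\<Sum>i\<in>insert 0 {1..r}. f i)"
      by (rule sum.cong) auto
    also have "\<dots> = (\<Sum>i=1..r. f i)" by (simp add: f_def)
    also have "\<dots> = - (\<Sum>k=1..r. z ^ k / of_nat k)" by (simp add: f_def sum_negf)
    finally show ?thesis .
  qed
  have gs: "(\<lambda>i. f (i + Suc r)) sums LogPr r z"
    using fs s0 unfolding LogPr_def by (subst sums_iff_shift) simp
  have bnd: "norm (f (i + Suc r)) \<le> norm z ^ (r+1) * (1/2) ^ i" for i
  proof -
    have "norm (f (i + Suc r)) = norm z ^ (i + Suc r) / real (i + Suc r)"
      unfolding f_def by (simp only: norm_divide norm_minus_cancel norm_power norm_of_nat)
    also have "\<dots> \<le> norm z ^ (i + Suc r)"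
      using divide_left_mono[of 1 "real (i+Suc r)" "norm z ^ (i+Suc r)"] by simp
    also have "\<dots> = norm z ^ (r+1) * norm z ^ i" by (simp add: power_add)
    also have "\<dots> \<le> norm z ^ (r+1) * (1/2) ^ i"
      by (intro mult_left_mono power_mono z) auto
    finally show ?thesis .
  qed
  have sg: "summable (\<lambda>i. norm z ^ (r+1) * (1/2::real) ^ i)"
    by (intro summable_mult summable_geometric) auto
  have "norm (LogPr r z) \<le> (\<Sum>i. norm z ^ (r+1) * (1/2::real) ^ i)"
    using norm_suminf_le[OF bnd sg] gs by (simp add: sums_iff)
  also have "\<dots> = 2 * norm z ^ (r+1)"
    using suminf_geometric[of "1/2::real"] by (subst suminf_mult) auto
  finally show ?thesis .
qed

definition gg :: "nat \<Rightarrow> complex \<Rightarrow> complex" where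
  "gg r y = LogPr r y + (-1) ^ (r - 1) * LogPr r (- y)"

definition AA :: "nat \<Rightarrow> complex \<Rightarrow> nat \<Rightarrow> complex" where
  "AA r y n = of_nat n ^ (r - 1) * gg r (y / of_nat n)"

lemma gg_bound:
  assumes z: "norm z \<le> 1/2"
  shows "norm (gg r z) \<le> 4 * norm z ^ (r+1)"
proof -
  have "norm (gg r z) \<le> norm (LogPr r z) + norm ((-1::complex) ^ (r - 1) * LogPr r (- z))"
    unfolding gg_def by (rule norm_triangle_ineq)
  also have "\<dots> = norm (LogPr r z) + norm (LogPr r (- z))"
    by (simp add: norm_mult norm_power)
  also have "\<dots> \<le> 2 * norm z ^ (r+1) + 2 * norm (-z) ^ (r+1)"
    using LogPr_bound[of z r] LogPr_bound[of "-z" r] z by (intro add_mono) auto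
  finally show ?thesis by simp
qed

lemma AA_bound:
  assumes r: "r \<ge> 1" and n: "n \<ge> 1" and yn: "norm y \<le> real n / 2"
  shows "norm (AA r y n) \<le> 4 * norm y ^ (r+1) / real n ^ 2"
proof -
  obtain p where rp: "r = Suc p" using r by (cases r) auto
  have npos: "real n > 0" using n by simp
  have z: "norm (y / of_nat n) \<le> 1/2"
    using yn npos by (simp add: norm_divide field_simps)
  have "norm (AA r y n) = real n ^ p * norm (gg r (y / of_nat n))"
    by (simp add: AA_def rp norm_mult norm_power)
  also have "\<dots> \<le> real n ^ p * (4 * norm (y / of_nat n) ^ (r+1))"
    by (intro mult_left_mono gg_bound z) auto
  also have "\<dots> = real n ^ p * (4 * norm y ^ (r+1) / (real n ^ p * real n ^ 2))"
    by (simp add: norm_divide power_divide rp power_add power2_eq_square)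
  also have "\<dots> = 4 * norm y ^ (r+1) / real n ^ 2"
    using npos by (simp add: field_simps)
  finally show ?thesis .
qed

lemma AA_summable:
  assumes r: "r \<ge> 1"
  shows "summable (\<lambda>m. AA r y (Suc m))"
proof (rule summable_comparison_test_ev)
  obtain N :: nat where N: "real N \<ge> 2 * norm y" using real_arch_simple by blast
  show "\<forall>\<^sub>F m in sequentially. norm (AA r y (Suc m)) \<le> 4 * norm y ^ (r+1) * inverse (real (Suc m) ^ 2)"
    using eventually_ge_at_top[of N]
  proof eventually_elim
    case (elim m)
    have "norm (AA r y (Suc m)) \<le> 4 * norm y ^ (r+1) / real (Suc m) ^ 2"
      using elim N by (intro AA_bound r) auto
    then show ?case by (simp add: divide_inverse)
  qed
  have "summable (\<lambda>n. inverse (real n ^ 2))"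
    by (rule inverse_power_summable) auto
  then have "summable (\<lambda>m. inverse (real (Suc m) ^ 2))"
    by (subst summable_Suc_iff)
  then show "summable (\<lambda>m. 4 * norm y ^ (r+1) * inverse (real (Suc m) ^ 2))"
    by (rule summable_mult)
qed

lemma Pr_exp: "z \<noteq> 1 \<Longrightarrow> Pr r z = exp (LogPr r z)"
  unfolding Pr_def LogPr_def by (simp add: exp_add)

lemma factor_exp:
  assumes "y / of_nat (Suc m) \<noteq> 1" "- y / of_nat (Suc m) \<noteq> 1"
  shows "(Pr r (y / of_nat (Suc m)) * (Pr r (- y / of_nat (Suc m))) powi ((-1) ^ (r - 1)))
               ^ (Suc m ^ (r - 1)) = exp (AA r y (Suc m))"
proof -
  have e: "- y / of_nat (Suc m) = - (y / of_nat (Suc m))" by simp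
  show ?thesis
    using assms unfolding e
    by (simp add: Pr_exp exp_power_int AA_def gg_def exp_add[symmetric]
                  exp_of_nat_mult[symmetric] del: of_nat_Suc)
qed

lemma msin_exp:
  assumes r: "r \<ge> 2" and y: "\<And>n::nat. n \<ge> 1 \<Longrightarrow> y / of_nat n \<noteq> 1 \<and> - y / of_nat n \<noteq> 1"
  shows "msin r y = exp (y ^ (r - 1) / of_nat (r - 1) + (\<Sum>m. AA r y (Suc m)))"
proof -
  have "(\<Prod>m. (Pr r (y / of_nat (Suc m)) * (Pr r (- y / of_nat (Suc m))) powi ((-1) ^ (r - 1)))
               ^ (Suc m ^ (r - 1))) = (\<Prod>m. exp (AA r y (Suc m)))"
  proof -
    have "\<And>m. (Pr r (y / of_nat (Suc m)) * (Pr r (- y / of_nat (Suc m))) powi ((-1) ^ (r - 1)))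
               ^ (Suc m ^ (r - 1)) = exp (AA r y (Suc m))"
    proof -
      fix m
      have "y / of_nat (Suc m) \<noteq> 1 \<and> - y / of_nat (Suc m) \<noteq> 1" by (rule y) simp
      then show "?thesis m" by (intro factor_exp) auto
    qed
    then show ?thesis by simp
  qed
  also have "\<dots> = exp (\<Sum>m. AA r y (Suc m))"
    by (rule prodinf_exp[OF AA_summable]) (use r in auto)
  finally show ?thesis using r unfolding msin_def by (simp add: exp_add)
qed

lemma Dom_avoid:
  assumes x: "x \<in> Dom" and c: "c \<ge> 1/2"
  shows "x \<noteq> complex_of_real c" "x \<noteq> - complex_of_real c"
proof -
  show "x \<noteq> complex_of_real c"
    using x c unfolding Dom_def by auto
  have "x \<noteq> complex_of_real (-c)"
    using x c unfolding Dom_def by auto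
  then show "x \<noteq> - complex_of_real c" by simp
qed

lemma Dom_good:
  assumes x: "x \<in> Dom" and n: "(n::nat) \<ge> 1"
  shows "x / of_nat n \<noteq> 1 \<and> - x / of_nat n \<noteq> 1 \<and> 2 * x / of_nat n \<noteq> 1 \<and> - (2 * x) / of_nat n \<noteq> 1"
proof -
  have n0: "(of_nat n :: complex) \<noteq> 0" using n by simp
  have c1: "real n \<ge> 1/2" "real n / 2 \<ge> 1/2" using n by auto
  have a: "x \<noteq> complex_of_real (real n)" "x \<noteq> - complex_of_real (real n)"
    by (rule Dom_avoid[OF x c1(1)])+
  have b: "x \<noteq> complex_of_real (real n / 2)" "x \<noteq> - complex_of_real (real n / 2)"
    by (rule Dom_avoid[OF x c1(2)])+
  show ?thesis
  proof (intro conjI notI)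
    assume "x / of_nat n = 1" then have "x = of_nat n" using n0 by (simp add: field_simps)
    then show False using a by simp
  next
    assume "- x / of_nat n = 1" then have "- x = of_nat n" using n0 by (simp add: field_simps)
    then have "x = - of_nat n" by (metis minus_minus)
    then show False using a by simp
  next
    assume "2 * x / of_nat n = 1" then have "x = of_nat n / 2" using n0 by (simp add: field_simps)
    then show False using b by simp
  next
    assume "- (2 * x) / of_nat n = 1" then have "- x = of_nat n / 2" using n0 by (simp add: field_simps)
    then have "x = - (of_nat n / 2)" by (metis minus_minus)
    then show False using b by simp
  qed
qed

lemma mcos_exp:
  assumes r: "r \<ge> 2"
  shows "mcos r x = exp (\<Sum>k. (1/2) ^ (r - 1) * AA r (2 * x) (2 * k + 1))"
proof -
  have "\<And>k. (of_nat (2*k+1) / 2) ^ (r - 1) *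
        (LogPr r (2 * x / of_nat (2*k+1)) + (-1) ^ (r - 1) * LogPr r (- 2 * x / of_nat (2*k+1)))
     = (1/2) ^ (r - 1) * AA r (2 * x) (2 * k + 1)"
  proof -
    fix k
    have e: "- 2 * x / of_nat (2*k+1) = - (2 * x / of_nat (2*k+1))" by simp
    show "?thesis k" unfolding e AA_def gg_def by (simp add: power_divide)
  qed
  then show ?thesis using r unfolding mcos_def by simp
qed

lemma AA_even: "AA r (2 * x) (2 * Suc m) = 2 ^ (r - 1) * AA r x (Suc m)"
proof -
  have o: "(of_nat (2 * Suc m) :: complex) = 2 * of_nat (Suc m)"
    by (simp only: of_nat_mult of_nat_numeral)
  have e: "2 * x / of_nat (2 * Suc m) = x / of_nat (Suc m)"
    unfolding o by (rule mult_divide_mult_cancel_left) simp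
  show ?thesis unfolding AA_def e unfolding o by (simp only: power_mult_distrib mult.assoc)
qed

theorem corollary3p2:
  fixes r :: nat and x :: complex
  assumes "r \<ge> 1"
    and "if r = 1 then msin 1 x \<noteq> 0 else x \<in> Dom"
  shows "mcos r x ^ (2 ^ (r - 1)) = msin r (2 * x) / msin r x ^ (2 ^ (r - 1))"
proof (cases "r = 1")
  case True
  then have s: "sin (of_real pi * x) \<noteq> 0" using assms(2) by (simp add: msin_def)
  have "2 * sin (of_real pi * (2 * x)) = 2 * (2 * cos (of_real pi * x)) * sin (of_real pi * x)"
    using sin_double[of "of_real pi * x"] by (simp add: mult_ac)
  then show ?thesis using True s by (simp add: msin_def mcos_def field_simps)
next
  case False
  then have r: "r \<ge> 2" using assms(1) by simp
  have xD: "x \<in> Dom" using assms(2) False by simp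
  define N :: nat where "N = 2 ^ (r - 1)"
  define S where "S = (\<Sum>m. AA r x (Suc m))"
  define Od where "Od = (\<Sum>k. AA r (2 * x) (2 * k + 1))"
  have sumx: "summable (\<lambda>m. AA r x (Suc m))" by (rule AA_summable) (use r in auto)
  have sum2x: "summable (\<lambda>m. AA r (2*x) (Suc m))" by (rule AA_summable) (use r in auto)
  have grp: "(\<lambda>n. AA r (2*x) (2*n+1) + 2 ^ (r - 1) * AA r x (Suc n)) sums (\<Sum>m. AA r (2*x) (Suc m))"
  proof -
    have "(\<lambda>n. sum (\<lambda>m. AA r (2*x) (Suc m)) {n * 2 ..< n * 2 + 2}) sums (\<Sum>m. AA r (2*x) (Suc m))"
      by (rule sums_group) (use sum2x in auto)
    moreover have "\<And>n. sum (\<lambda>m. AA r (2*x) (Suc m)) {n * 2 ..< n * 2 + 2}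
        = AA r (2*x) (2*n+1) + 2 ^ (r - 1) * AA r x (Suc n)"
    proof -
      fix n
      have "{n * 2 ..< n * 2 + 2} = {2*n, 2*n+1::nat}" by auto
      moreover have "Suc (2*n+1) = 2 * Suc n" by simp
      ultimately show "?thesis n" using AA_even[of r x n] by simp
    qed
    ultimately show ?thesis by simp
  qed
  have sev: "(\<lambda>n. 2 ^ (r - 1) * AA r x (Suc n)) sums (2 ^ (r - 1) * S)"
    unfolding S_def by (rule sums_mult) (use sumx in auto)
  have sodd: "(\<lambda>n. AA r (2*x) (2*n+1)) sums ((\<Sum>m. AA r (2*x) (Suc m)) - 2 ^ (r - 1) * S)"
    using sums_diff[OF grp sev] by simp
  then have Od_eq: "Od = (\<Sum>m. AA r (2*x) (Suc m)) - 2 ^ (r - 1) * S"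
    unfolding Od_def by (simp add: sums_iff)
  have sumodd: "summable (\<lambda>n. AA r (2*x) (2*n+1))" using sodd by (simp add: sums_iff)
  have good1: "\<And>n::nat. n \<ge> 1 \<Longrightarrow> x / of_nat n \<noteq> 1 \<and> - x / of_nat n \<noteq> 1"
    using Dom_good[OF xD] by blast
  have good2: "\<And>n::nat. n \<ge> 1 \<Longrightarrow> 2 * x / of_nat n \<noteq> 1 \<and> - (2 * x) / of_nat n \<noteq> 1"
    using Dom_good[OF xD] by blast
  have ms1: "msin r x = exp (x ^ (r - 1) / of_nat (r - 1) + S)"
    unfolding S_def by (rule msin_exp[OF r good1])
  have ms2: "msin r (2*x) = exp ((2*x) ^ (r - 1) / of_nat (r - 1) + (Od + 2 ^ (r - 1) * S))"
    unfolding Od_eq by (subst msin_exp[OF r good2]) auto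
  have mc: "mcos r x = exp ((1/2) ^ (r - 1) * Od)"
    unfolding Od_def using mcos_exp[OF r, of x] suminf_mult[OF sumodd, of "(1/2)^(r-1)"] by simp
  have N: "(of_nat N :: complex) = 2 ^ (r - 1)" by (simp add: N_def)
  have "mcos r x ^ N = exp (of_nat N * ((1/2) ^ (r - 1) * Od))"
    unfolding mc exp_of_nat_mult ..
  also have "\<dots> = exp Od" unfolding N by (simp add: power_one_over)
  finally have c: "mcos r x ^ N = exp Od" .
  have "msin r x ^ N = exp (of_nat N * (x ^ (r - 1) / of_nat (r - 1) + S))"
    unfolding ms1 exp_of_nat_mult ..
  then have "msin r (2 * x) / msin r x ^ N
     = exp ((2*x) ^ (r - 1) / of_nat (r - 1) + (Od + 2 ^ (r - 1) * S)
            - of_nat N * (x ^ (r - 1) / of_nat (r - 1) + S))"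
    unfolding ms2 by (simp add: exp_diff)
  also have "\<dots> = exp Od"
    unfolding N by (simp add: power_mult_distrib algebra_simps)
  finally show ?thesis using c unfolding N_def by simp
qed

end
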